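(* Let $c_1>0$ be a sufficiently small absolute constant and $K=\exp(c_1 s)$. For any fixed $\mathbf{A}\in\mathcal{A}_{\mathsf{suc}}$, with probability at least $1-\exp(-s/2)$ over $V=\{\mathbf{v}_1,\dots,\mathbf{v}_{16sK}\}$ drawn independently and uniformly from $\frac1{\sqrt d}\mathcal{H}_d$, $$\big|\mathcal{N}(\mathsf{O}^{\mathbf{M}_\mathbf{A}}(\mathbf{A},V),d^{-8})\big|\ge K.$$
   Context: Setting: $d$ large, $\delta\in(0,1)$, $k=d^{1-\delta-o(1)}$, $s=d^{1-\delta/2}\log^2 d$, $\xi=2\exp(-\log^5 d)$, $\xi'=\sqrt d\xi$, $\mathcal{H}_d=\{-1,1\}^d$, $\mathbb{S}^d$ the unit sphere. A fixed deterministic $(k,n)$-protocol: on $\mathbf{A}\in\{-1,1\}^{(d/2)\times d}$ Alice sends $\mathbf{M}_\mathbf{A}\in\{0,1\}^{kd}$; after receiving $\mathbf{v}\in\frac1{\sqrt d}\mathcal{H}_d$ she sends $\mathbf{R}_{\mathbf{A},\mathbf{v}}\in(\mathsf{row}(\mathbf{A})\cup\{\mathsf{nil}\})^n$; Bob outputs a unit vector $\mathbf{x}_{\mathbf{M},\mathbf{v},\mathbf{R}}\in\mathbb{S}^d$, defined for all $\mathbf{M}\in\{0,1\}^{kd}$, $\mathbf{v}$, $\mathbf{R}\in(\{-1,1\}^d\cup\{\mathsf{nil}\})^n$; $\mathbf{x}_{\mathbf{A},\mathbf{v}}=\mathbf{x}_{\mathbf{M}_\mathbf{A},\mathbf{v},\mathbf{R}_{\mathbf{A},\mathbf{v}}}$.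 Success on $(\mathbf{A},\mathbf{v})$: $\|\mathbf{A}\mathbf{x}_{\mathbf{A},\mathbf{v}}\|_\infty\le\xi'$ and $|\langle\mathbf{v},\mathbf{x}_{\mathbf{A},\mathbf{v}}\rangle|\ge\sqrt{s/d}$; the protocol succeeds with probability at least $1/2$ over uniform $(\mathbf{A},\mathbf{v})$. $\mathcal{A}_{\mathsf{suc}}$: the matrices $\mathbf{A}$ on which it succeeds with probability at least $1/4$ over uniform $\mathbf{v}$. For a matrix $\mathbf{B}\in\{-1,1\}^{m\times d}$ ($m\le d/2$), write $\mathbf{R}\subseteq\mathsf{row}(\mathbf{B})\cup\{\mathsf{nil}\}$ if every entry of $\mathbf{R}$ is $\mathsf{nil}$ or a row of $\mathbf{B}$. Table: $\mathsf{T}^{\mathbf{M}}(\mathbf{B},V)=\{\mathbf{x}_{\mathbf{M},\mathbf{v},\mathbf{R}}:\mathbf{v}\in V,\ \mathbf{R}\subseteq\mathsf{row}(\mathbf{B})\cup\{\mathsf{nil}\}\}$. Orthogonal entries: $\mathsf{O}^{\mathbf{M}}(\mathbf{B},V)=\{\mathbf{x}\in\mathsf{T}^{\mathbf{M}}(\mathbf{B},V):\|\mathbf{B}\mathbf{x}\|_\infty\le\xi'\}$. For $X\subseteq\mathbb{R}^d$ and $\alpha>0$, $\mathcal{N}(X,\alpha)$ denotes a largest subset $X'\subseteq X$ whose points have pairwise distance at least $\alpha$. *)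

theory Defs
  imports Complex_Main "HOL-Library.FuncSet"
begin

(* Vectors of R^d are represented as functions nat => real vanishing outside {0..<d};
   a matrix with m rows is a function nat => (nat => real), row i being B i,
   with all rows i >= m equal to zero. *)

definition hcube :: "nat \<Rightarrow> (nat \<Rightarrow> real) set" where
  "hcube d = {x. (\<forall>j<d. x j \<in> {-1, 1}) \<and> (\<forall>j\<ge>d. x j = 0)}"

definition scaled_hcube :: "nat \<Rightarrow> (nat \<Rightarrow> real) set" where
  "scaled_hcube d = {x. (\<forall>j<d. x j \<in> {-1 / sqrt d, 1 / sqrt d}) \<and> (\<forall>j\<ge>d. x j = 0)}"

definition sign_mats :: "nat \<Rightarrow> nat \<Rightarrow> (nat \<Rightarrow> nat \<Rightarrow> real) set" where
  "sign_mats m d = {B. (\<forall>i<m. B i \<in> hcube d) \<and> (\<forall>i\<ge>m. B i = (\<lambda>_. 0))}"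

definition unit_sphere_d :: "nat \<Rightarrow> (nat \<Rightarrow> real) set" where
  "unit_sphere_d d = {x. (\<forall>j\<ge>d. x j = 0) \<and> (\<Sum>j<d. (x j)^2) = 1}"

definition inner_d :: "nat \<Rightarrow> (nat \<Rightarrow> real) \<Rightarrow> (nat \<Rightarrow> real) \<Rightarrow> real" where
  "inner_d d x y = (\<Sum>j<d. x j * y j)"

definition dist_d :: "nat \<Rightarrow> (nat \<Rightarrow> real) \<Rightarrow> (nat \<Rightarrow> real) \<Rightarrow> real" where
  "dist_d d x y = sqrt (\<Sum>j<d. (x j - y j)^2)"

definition inf_norm_le :: "nat \<Rightarrow> nat \<Rightarrow> (nat \<Rightarrow> nat \<Rightarrow> real) \<Rightarrow> (nat \<Rightarrow> real) \<Rightarrow> real \<Rightarrow> bool" where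
  "inf_norm_le m d B x t = (\<forall>i<m. \<bar>\<Sum>j<d. B i j * x j\<bar> \<le> t)"

definition rows_sub :: "nat \<Rightarrow> (nat \<Rightarrow> nat \<Rightarrow> real) \<Rightarrow> (nat \<Rightarrow> real) option list \<Rightarrow> bool" where
  "rows_sub m B R = (\<forall>r\<in>set R. r = None \<or> (\<exists>i<m. r = Some (B i)))"

type_synonym out_fn = "bool list \<Rightarrow> (nat \<Rightarrow> real) \<Rightarrow> (nat \<Rightarrow> real) option list \<Rightarrow> (nat \<Rightarrow> real)"

definition is_protocol :: "nat \<Rightarrow> nat \<Rightarrow> nat \<Rightarrow> ((nat \<Rightarrow> nat \<Rightarrow> real) \<Rightarrow> bool list)
    \<Rightarrow> ((nat \<Rightarrow> nat \<Rightarrow> real) \<Rightarrow> (nat \<Rightarrow> real) \<Rightarrow> (nat \<Rightarrow> real) option list) \<Rightarrow> out_fn \<Rightarrow> bool" where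
  "is_protocol d k n msg resp out =
    ((\<forall>A\<in>sign_mats (d div 2) d. length (msg A) = k * d \<and>
        (\<forall>v\<in>scaled_hcube d. length (resp A v) = n \<and> rows_sub (d div 2) A (resp A v))) \<and>
     (\<forall>M v R. length M = k * d \<and> v \<in> scaled_hcube d \<and> length R = n \<and>
        (\<forall>r\<in>set R. r = None \<or> (\<exists>h\<in>hcube d. r = Some h)) \<longrightarrow> out M v R \<in> unit_sphere_d d))"

definition succeeds :: "nat \<Rightarrow> real \<Rightarrow> real \<Rightarrow> ((nat \<Rightarrow> nat \<Rightarrow> real) \<Rightarrow> bool list)
    \<Rightarrow> ((nat \<Rightarrow> nat \<Rightarrow> real) \<Rightarrow> (nat \<Rightarrow> real) \<Rightarrow> (nat \<Rightarrow> real) option list) \<Rightarrow> out_fn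
    \<Rightarrow> (nat \<Rightarrow> nat \<Rightarrow> real) \<Rightarrow> (nat \<Rightarrow> real) \<Rightarrow> bool" where
  "succeeds d s xi' msg resp out A v =
    (let x = out (msg A) v (resp A v)
     in inf_norm_le (d div 2) d A x xi' \<and> \<bar>inner_d d v x\<bar> \<ge> sqrt (s / d))"

definition A_suc :: "nat \<Rightarrow> real \<Rightarrow> real \<Rightarrow> ((nat \<Rightarrow> nat \<Rightarrow> real) \<Rightarrow> bool list)
    \<Rightarrow> ((nat \<Rightarrow> nat \<Rightarrow> real) \<Rightarrow> (nat \<Rightarrow> real) \<Rightarrow> (nat \<Rightarrow> real) option list) \<Rightarrow> out_fn
    \<Rightarrow> (nat \<Rightarrow> nat \<Rightarrow> real) set" where
  "A_suc d s xi' msg resp out =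
    {A \<in> sign_mats (d div 2) d.
       real (card {v \<in> scaled_hcube d. succeeds d s xi' msg resp out A v})
         \<ge> 1/4 * real (card (scaled_hcube d))}"

definition table :: "nat \<Rightarrow> nat \<Rightarrow> out_fn \<Rightarrow> bool list \<Rightarrow> (nat \<Rightarrow> nat \<Rightarrow> real)
    \<Rightarrow> (nat \<Rightarrow> real) set \<Rightarrow> (nat \<Rightarrow> real) set" where
  "table n m out M B V = {out M v R | v R. v \<in> V \<and> length R = n \<and> rows_sub m B R}"

definition orth_entries :: "nat \<Rightarrow> nat \<Rightarrow> nat \<Rightarrow> real \<Rightarrow> out_fn \<Rightarrow> bool list
    \<Rightarrow> (nat \<Rightarrow> nat \<Rightarrow> real) \<Rightarrow> (nat \<Rightarrow> real) set \<Rightarrow> (nat \<Rightarrow> real) set" where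
  "orth_entries d n m xi' out M B V = {x \<in> table n m out M B V. inf_norm_le m d B x xi'}"

definition separated :: "nat \<Rightarrow> real \<Rightarrow> (nat \<Rightarrow> real) set \<Rightarrow> bool" where
  "separated d \<alpha> Y = (\<forall>x\<in>Y. \<forall>y\<in>Y. x \<noteq> y \<longrightarrow> dist_d d x y \<ge> \<alpha>)"

definition packing_card :: "nat \<Rightarrow> (nat \<Rightarrow> real) set \<Rightarrow> real \<Rightarrow> nat" where
  "packing_card d X \<alpha> = Max (card ` {Y. Y \<subseteq> X \<and> finite Y \<and> separated d \<alpha> Y})"

end

theory Submission
  imports Defs "HOL-Probability.Hoeffding" "HOL-Analysis.L2_Norm"
begin


lemma cosh_bound: "(exp (a::real) + exp (-a)) / 2 \<le> exp (a^2/2)"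
proof -
  have key: "(exp b + exp (-b)) / 2 \<le> exp (b^2/2)" if "b \<ge> 0" for b :: real
  proof -
    have "-(2*b) * (1/2) + ln (1 + (1/2) * (exp (2*b) - 1)) \<le> (2*b)\<^sup>2 / 8"
      using Hoeffdings_lemma_aux[of "2*b" "1/2"] that by simp
    hence "ln ((1 + exp (2*b))/2) \<le> b + b^2/2" by (simp add: power2_eq_square field_simps)
    hence "(1 + exp (2*b))/2 \<le> exp (b + b^2/2)"
      by (smt (verit) exp_gt_zero exp_le_cancel_iff exp_ln)
    hence "exp (-b) * ((1 + exp (2*b))/2) \<le> exp (-b) * exp (b + b^2/2)" by simp
    moreover have "exp (-b) * ((1 + exp (2*b))/2) = (exp b + exp (-b)) / 2"
      by (simp add: field_simps flip: exp_add)
    moreover have "exp (-b) * exp (b + b^2/2) = exp (b^2/2)" by (simp flip: exp_add)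
    ultimately show ?thesis by simp
  qed
  show ?thesis
  proof (cases "a \<ge> 0")
    case True then show ?thesis using key by blast
  next
    case False then show ?thesis using key[of "-a"] by (simp add: add.commute)
  qed
qed

definition G :: "nat \<Rightarrow> real \<Rightarrow> (nat \<Rightarrow> real) set" where
  "G n c = {x. (\<forall>j<n. x j \<in> {-c, c}) \<and> (\<forall>j\<ge>n. x j = 0)}"

lemma G_0: "G 0 c = {\<lambda>_. 0}" by (auto simp: G_def)

lemma G_Suc: "G (Suc n) c = (\<lambda>(x,b). x(n:=b)) ` (G n c \<times> {-c,c})"
proof (intro set_eqI iffI)
  fix y assume y: "y \<in> G (Suc n) c"
  have "y(n:=0) \<in> G n c" using y by (auto simp: G_def)
  moreover have "y n \<in> {-c,c}" using y by (auto simp: G_def)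
  ultimately show "y \<in> (\<lambda>(x,b). x(n:=b)) ` (G n c \<times> {-c,c})"
    by (intro image_eqI[of _ _ "(y(n:=0), y n)"]) auto
next
  fix y assume "y \<in> (\<lambda>(x,b). x(n:=b)) ` (G n c \<times> {-c,c})"
  then obtain x b where "x \<in> G n c" "b \<in> {-c,c}" "y = x(n:=b)" by auto
  then show "y \<in> G (Suc n) c" by (auto simp: G_def less_Suc_eq)
qed

lemma G_inj: "inj_on (\<lambda>(x,b). x(n:=b)) (G n c \<times> {-c,c})"
proof (rule inj_onI, clarify)
  fix x b x' b' assume a: "x \<in> G n c" "x' \<in> G n c" "x(n:=b) = x'(n:=b')"
  have e: "x = (x(n:=b))(n:=0)" "x' = (x'(n:=b'))(n:=0)"
    using a(1,2) by (auto simp: G_def)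
  have "b = b'" using a(3) by (metis fun_upd_same)
  moreover have "x = x'" using e a(3) by metis
  ultimately show "x = x' \<and> b = b'" by simp
qed

lemma G_finite: "finite (G n c)"
  by (induction n) (auto simp: G_0 G_Suc)

lemma G_sum: assumes "c \<noteq> 0"
  shows "(\<Sum>x\<in>G n c. exp (\<Sum>j<n. x j * a j)) = (\<Prod>j<n. exp (c * a j) + exp (-c * a j))"
proof (induction n)
  case 0 then show ?case by (simp add: G_0)
next
  case (Suc n)
  have "(\<Sum>x\<in>G (Suc n) c. exp (\<Sum>j<Suc n. x j * a j))
      = (\<Sum>p\<in>G n c \<times> {-c,c}. exp (\<Sum>j<Suc n. ((fst p)(n:=snd p)) j * a j))"
    unfolding G_Suc by (subst sum.reindex[OF G_inj]) (simp add: case_prod_unfold)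
  also have "\<dots> = (\<Sum>p\<in>G n c \<times> {-c,c}. exp (\<Sum>j<n. fst p j * a j) * exp (snd p * a n))"
  proof (intro sum.cong refl)
    fix p :: "(nat \<Rightarrow> real) \<times> real"
    have "(\<Sum>j<n. ((fst p)(n:=snd p)) j * a j) = (\<Sum>j<n. fst p j * a j)"
      by (rule sum.cong) auto
    then have "(\<Sum>j<Suc n. ((fst p)(n:=snd p)) j * a j) = (\<Sum>j<n. fst p j * a j) + snd p * a n"
      by (simp only: sum.lessThan_Suc) simp
    then show "exp (\<Sum>j<Suc n. ((fst p)(n:=snd p)) j * a j) = exp (\<Sum>j<n. fst p j * a j) * exp (snd p * a n)"
      by (simp add: exp_add)
  qed
  also have "\<dots> = (\<Sum>x\<in>G n c. \<Sum>b\<in>{-c,c}. exp (\<Sum>j<n. x j * a j) * exp (b * a n))"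
    by (simp add: sum.cartesian_product case_prod_unfold)
  also have "\<dots> = (\<Sum>x\<in>G n c. exp (\<Sum>j<n. x j * a j)) * (exp (c * a n) + exp (-c * a n))"
  proof -
    have "-c \<noteq> c" using assms by simp
    then have "\<And>E. (\<Sum>b\<in>{-c,c}. E * exp (b * a n)) = E * (exp (c * a n) + exp (-c * a n))"
      by (simp add: algebra_simps)
    then show ?thesis by (simp add: sum_distrib_right)
  qed
  finally show ?case using Suc by simp
qed

lemma G_card: assumes "c \<noteq> 0" shows "card (G n c) = 2^n"
proof -
  have "real (card (G n c)) = (\<Sum>x\<in>G n c. exp (\<Sum>j<n. x j * 0))" by simp
  also have "\<dots> = 2^n" using G_sum[OF assms, where n=n and a="\<lambda>_. 0"] by simp
  finally have "real (card (G n c)) = real (2^n)" by simp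
  then show ?thesis by (simp only: of_nat_eq_iff)
qed

lemma G_tail:
  assumes c: "c > 0" and l: "l > 0"
  shows "real (card {x\<in>G n c. (\<Sum>j<n. x j * a j) \<ge> u})
           \<le> exp (-l*u) * 2^n * exp (l^2 * c^2 * (\<Sum>j<n. (a j)^2) / 2)"
proof -
  let ?S = "{x\<in>G n c. (\<Sum>j<n. x j * a j) \<ge> u}"
  have fin: "finite (G n c)" by (rule G_finite)
  have "real (card ?S) = (\<Sum>x\<in>?S. 1)" by simp
  also have "\<dots> \<le> (\<Sum>x\<in>?S. exp (-l*u) * exp (\<Sum>j<n. x j * (l * a j)))"
  proof (rule sum_mono)
    fix x assume "x \<in> ?S"
    then have "l * u \<le> l * (\<Sum>j<n. x j * a j)" using l by (simp add: mult_left_mono)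
    then have "0 \<le> -l*u + (\<Sum>j<n. x j * (l * a j))"
      by (simp add: sum_distrib_left algebra_simps)
    then have "1 \<le> exp (-l*u + (\<Sum>j<n. x j * (l * a j)))" by simp
    moreover have "exp (-l*u) * exp (\<Sum>j<n. x j * (l * a j)) = exp (-l*u + (\<Sum>j<n. x j * (l * a j)))"
      by (rule exp_add[symmetric])
    ultimately show "1 \<le> exp (-l*u) * exp (\<Sum>j<n. x j * (l * a j))" by simp
  qed
  also have "\<dots> \<le> (\<Sum>x\<in>G n c. exp (-l*u) * exp (\<Sum>j<n. x j * (l * a j)))"
    by (rule sum_mono2[OF fin]) auto
  also have "\<dots> = exp (-l*u) * (\<Prod>j<n. exp (c * (l * a j)) + exp (-c * (l * a j)))"
    using G_sum[where c=c and n=n and a="\<lambda>j. l * a j"] c by (subst sum_distrib_left[symmetric]) simp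
  also have "\<dots> \<le> exp (-l*u) * (\<Prod>j<n. 2 * exp ((c * (l * a j))^2 / 2))"
  proof (intro mult_left_mono prod_mono conjI)
    fix j
    show "0 \<le> exp (c * (l * a j)) + exp (-c * (l * a j))" by (simp add: add_nonneg_nonneg)
    show "exp (c * (l * a j)) + exp (-c * (l * a j)) \<le> 2 * exp ((c * (l * a j))^2 / 2)"
      using cosh_bound[of "c * (l * a j)"] by simp
  qed simp
  also have "(\<Prod>j<n. 2 * exp ((c * (l * a j))^2 / 2)) = 2^n * exp (\<Sum>j<n. (c * (l * a j))^2 / 2)"
    by (simp add: prod.distrib exp_sum)
  also have "(\<Sum>j<n. (c * (l * a j))^2 / 2) = l^2 * c^2 * (\<Sum>j<n. (a j)^2) / 2"
    by (simp add: sum_distrib_left sum_divide_distrib power_mult_distrib algebra_simps)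
  finally show ?thesis by (simp add: mult.assoc)
qed

lemma scaled_hcube_G: "scaled_hcube d = G d (1 / sqrt d)"
  unfolding scaled_hcube_def G_def by simp

lemma hoeffding_count:
  assumes d: "d > 0" and y: "(\<Sum>j<d. (y j)^2) = 1" and u: "u \<ge> 0"
  shows "real (card {v\<in>scaled_hcube d. \<bar>inner_d d v y\<bar> \<ge> u})
          \<le> 2 * exp (- (real d * u^2 / 2)) * real (card (scaled_hcube d))"
proof (cases "u = 0")
  case True
  have "card {v\<in>scaled_hcube d. \<bar>inner_d d v y\<bar> \<ge> u} \<le> card (scaled_hcube d)"
    by (rule card_mono) (auto simp: G_finite scaled_hcube_G)
  then show ?thesis using True by simp
next
  case False
  then have u': "u > 0" using u by simp
  let ?c = "1 / sqrt (real d)" and ?l = "real d * u"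
  have c: "?c > 0" using d by simp
  have l: "?l > 0" using d u' by simp
  have cH: "real (card (scaled_hcube d)) = 2^d"
    using G_card[of ?c d] c by (simp add: scaled_hcube_G)
  have bnd: "exp (-?l*u) * 2^d * exp (?l^2 * ?c^2 * 1 / 2) = exp (- (real d * u^2 / 2)) * 2^d"
  proof -
    have cc: "?c^2 = 1 / real d" using d by (simp add: power_divide)
    have "?l^2 * ?c^2 * 1 / 2 = real d * u^2 / 2" unfolding cc using d by (simp add: power2_eq_square field_simps)
    moreover have "-?l*u + real d * u^2 / 2 = - (real d * u^2 / 2)" by (simp add: power2_eq_square field_simps)
    then have "exp (-?l*u) * exp (real d * u^2 / 2) = exp (- (real d * u^2 / 2))"
      by (metis exp_add)
    ultimately show ?thesis by (metis mult.commute mult.left_commute)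
  qed
  have t1: "real (card {x\<in>G d ?c. (\<Sum>j<d. x j * y j) \<ge> u}) \<le> exp (- (real d * u^2 / 2)) * 2^d"
    using G_tail[OF c l, where n=d and a=y and u=u] unfolding y bnd .
  have t2: "real (card {x\<in>G d ?c. (\<Sum>j<d. x j * (- y j)) \<ge> u}) \<le> exp (- (real d * u^2 / 2)) * 2^d"
    using G_tail[OF c l, where n=d and a="\<lambda>j. - y j" and u=u] unfolding power2_minus y bnd .
  have sub: "{v\<in>scaled_hcube d. \<bar>inner_d d v y\<bar> \<ge> u}
      \<subseteq> {x\<in>G d ?c. (\<Sum>j<d. x j * y j) \<ge> u} \<union> {x\<in>G d ?c. (\<Sum>j<d. x j * (- y j)) \<ge> u}"
  proof
    fix v assume "v \<in> {v\<in>scaled_hcube d. \<bar>inner_d d v y\<bar> \<ge> u}"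
    then have v: "v \<in> G d ?c" "\<bar>(\<Sum>j<d. v j * y j)\<bar> \<ge> u"
      by (simp_all add: scaled_hcube_G inner_d_def)
    have neg: "(\<Sum>j<d. v j * (- y j)) = - (\<Sum>j<d. v j * y j)" by (simp add: sum_negf)
    show "v \<in> {x\<in>G d ?c. (\<Sum>j<d. x j * y j) \<ge> u} \<union> {x\<in>G d ?c. (\<Sum>j<d. x j * (- y j)) \<ge> u}"
    proof (cases "(\<Sum>j<d. v j * y j) \<ge> 0")
      case True then show ?thesis using v by simp
    next
      case False then show ?thesis using v neg by simp
    qed
  qed
  have "real (card {v\<in>scaled_hcube d. \<bar>inner_d d v y\<bar> \<ge> u})
      \<le> real (card ({x\<in>G d ?c. (\<Sum>j<d. x j * y j) \<ge> u} \<union> {x\<in>G d ?c. (\<Sum>j<d. x j * (- y j)) \<ge> u}))"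
    by (intro of_nat_mono card_mono sub) (simp add: G_finite)
  also have "\<dots> \<le> real (card {x\<in>G d ?c. (\<Sum>j<d. x j * y j) \<ge> u}) + real (card {x\<in>G d ?c. (\<Sum>j<d. x j * (- y j)) \<ge> u})"
    using of_nat_mono[OF card_Un_le[of "{x\<in>G d ?c. (\<Sum>j<d. x j * y j) \<ge> u}" "{x\<in>G d ?c. (\<Sum>j<d. x j * (- y j)) \<ge> u}"], where 'a=real]
    by simp
  also have "\<dots> \<le> 2 * exp (- (real d * u^2 / 2)) * 2^d" using t1 t2 by simp
  finally show ?thesis using cH by simp
qed



lemma prod_if_const:
  assumes "finite U" "I \<subseteq> U"
  shows "(\<Prod>j\<in>U. if j \<in> I then (1::nat) else c) = c ^ (card U - card I)"
proof -
  have "(\<Prod>j\<in>U. if j \<in> I then (1::nat) else c) = (\<Prod>j\<in>U - I. c)"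
    using assms by (intro prod.mono_neutral_cong_right) auto
  also have "\<dots> = c ^ card (U - I)" by simp
  also have "card (U - I) = card U - card I" using assms by (simp add: card_Diff_subset finite_subset)
  finally show ?thesis .
qed

lemma count_union:
  fixes H :: "'a set" and S :: "nat set \<Rightarrow> (nat \<Rightarrow> 'a) \<Rightarrow> 'a set"
  assumes H: "finite H" and Fam: "Fam \<subseteq> Pow {..<N}"
    and S: "\<And>I w. I \<in> Fam \<Longrightarrow> w \<in> PiE I (\<lambda>_. H) \<Longrightarrow> S I w \<subseteq> H \<and> real (card (S I w)) \<le> q * real (card H)"
    and q: "q \<ge> 0"
  shows "real (card {Vt\<in>PiE {..<N} (\<lambda>_. H). \<exists>I\<in>Fam. \<forall>j\<in>{..<N}-I. Vt j \<in> S I (restrict Vt I)})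
           \<le> real (card H)^N * (\<Sum>I\<in>Fam. q^(N - card I))"
proof -
  let ?U = "{..<N}"
  let ?F = "\<lambda>I w j. if j \<in> I then {w j} else S I w"
  have finFam: "finite Fam" using Fam by (rule finite_subset) simp
  have sub: "{Vt\<in>PiE ?U (\<lambda>_. H). \<exists>I\<in>Fam. \<forall>j\<in>?U-I. Vt j \<in> S I (restrict Vt I)}
      \<subseteq> (\<Union>I\<in>Fam. \<Union>w\<in>PiE I (\<lambda>_. H). PiE ?U (?F I w))"
  proof clarify
    fix Vt I assume Vt: "Vt \<in> PiE ?U (\<lambda>_. H)" and I: "I \<in> Fam"
      and h: "\<forall>j\<in>?U-I. Vt j \<in> S I (restrict Vt I)"
    have IU: "I \<subseteq> ?U" using I Fam by auto
    have w: "restrict Vt I \<in> PiE I (\<lambda>_. H)" using Vt IU by (auto simp: PiE_iff)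
    have "Vt \<in> PiE ?U (?F I (restrict Vt I))"
      using Vt h by (auto simp: PiE_iff)
    then show "Vt \<in> (\<Union>I\<in>Fam. \<Union>w\<in>PiE I (\<lambda>_. H). PiE ?U (?F I w))" using I w by blast
  qed
  have finU: "finite (\<Union>I\<in>Fam. \<Union>w\<in>PiE I (\<lambda>_. H). PiE ?U (?F I w))"
  proof (intro finite_UN_I finFam)
    fix I w assume "I \<in> Fam" "w \<in> PiE I (\<lambda>_. H)"
    then have "S I w \<subseteq> H" using S by blast
    then have "\<And>j. finite (?F I w j)" using H finite_subset by auto
    then show "finite (PiE ?U (?F I w))" by (intro finite_PiE) auto
  next
    fix I assume "I \<in> Fam"
    then have "finite I" using Fam by (auto intro: finite_subset)
    then show "finite (PiE I (\<lambda>_. H))" using H by (intro finite_PiE) auto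
  qed
  have "card {Vt\<in>PiE ?U (\<lambda>_. H). \<exists>I\<in>Fam. \<forall>j\<in>?U-I. Vt j \<in> S I (restrict Vt I)}
      \<le> card (\<Union>I\<in>Fam. \<Union>w\<in>PiE I (\<lambda>_. H). PiE ?U (?F I w))"
    by (rule card_mono[OF finU sub])
  also have "\<dots> \<le> (\<Sum>I\<in>Fam. card (\<Union>w\<in>PiE I (\<lambda>_. H). PiE ?U (?F I w)))"
    by (rule card_UN_le[OF finFam])
  also have "\<dots> \<le> (\<Sum>I\<in>Fam. \<Sum>w\<in>PiE I (\<lambda>_. H). card (PiE ?U (?F I w)))"
  proof (rule sum_mono)
    fix I assume "I \<in> Fam"
    then have "finite I" using Fam by (auto intro: finite_subset)
    then show "card (\<Union>w\<in>PiE I (\<lambda>_. H). PiE ?U (?F I w)) \<le> (\<Sum>w\<in>PiE I (\<lambda>_. H). card (PiE ?U (?F I w)))"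
      using H by (intro card_UN_le finite_PiE) auto
  qed
  finally have c0: "card {Vt\<in>PiE ?U (\<lambda>_. H). \<exists>I\<in>Fam. \<forall>j\<in>?U-I. Vt j \<in> S I (restrict Vt I)}
      \<le> (\<Sum>I\<in>Fam. \<Sum>w\<in>PiE I (\<lambda>_. H). card (PiE ?U (?F I w)))" .
  have "real (card {Vt\<in>PiE ?U (\<lambda>_. H). \<exists>I\<in>Fam. \<forall>j\<in>?U-I. Vt j \<in> S I (restrict Vt I)})
      \<le> real (\<Sum>I\<in>Fam. \<Sum>w\<in>PiE I (\<lambda>_. H). card (PiE ?U (?F I w)))"
    using c0 by (rule of_nat_mono)
  also have "\<dots> = (\<Sum>I\<in>Fam. \<Sum>w\<in>PiE I (\<lambda>_. H). real (card (PiE ?U (?F I w))))"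
    by simp
  also have "\<dots> \<le> (\<Sum>I\<in>Fam. \<Sum>w\<in>PiE I (\<lambda>_. H). (q * real (card H)) ^ (N - card I))"
  proof (intro sum_mono)
    fix I w assume I: "I \<in> Fam" and w: "w \<in> PiE I (\<lambda>_. H)"
    have IU: "I \<subseteq> ?U" using I Fam by auto
    have "card (PiE ?U (?F I w)) = (\<Prod>j\<in>?U. card (?F I w j))" by (simp add: card_PiE)
    also have "\<dots> = (\<Prod>j\<in>?U. if j \<in> I then 1 else card (S I w))"
      by (intro prod.cong) auto
    also have "\<dots> = card (S I w) ^ (N - card I)" using prod_if_const[OF _ IU] by simp
    finally have "real (card (PiE ?U (?F I w))) = real (card (S I w)) ^ (N - card I)" by simp
    also have "\<dots> \<le> (q * real (card H)) ^ (N - card I)"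
      using S[OF I w] by (intro power_mono) auto
    finally show "real (card (PiE ?U (?F I w))) \<le> (q * real (card H)) ^ (N - card I)" .
  qed
  also have "\<dots> = (\<Sum>I\<in>Fam. real (card H)^N * q^(N - card I))"
  proof (intro sum.cong refl)
    fix I assume I: "I \<in> Fam"
    have IU: "I \<subseteq> ?U" using I Fam by auto
    have fI: "finite I" using IU finite_subset by auto
    have cI: "card I \<le> N" using card_mono[OF _ IU] by simp
    have "(\<Sum>w\<in>PiE I (\<lambda>_. H). (q * real (card H)) ^ (N - card I))
        = real (card (PiE I (\<lambda>_. H))) * (q * real (card H)) ^ (N - card I)" by simp
    also have "card (PiE I (\<lambda>_. H)) = card H ^ card I" using fI by (simp add: card_PiE)
    also have "real (card H ^ card I) * (q * real (card H)) ^ (N - card I)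
        = q^(N - card I) * (real (card H) ^ card I * real (card H) ^ (N - card I))"
      by (simp add: power_mult_distrib)
    also have "real (card H) ^ card I * real (card H) ^ (N - card I) = real (card H) ^ N"
      using cI by (simp flip: power_add)
    finally show "(\<Sum>w\<in>PiE I (\<lambda>_. H). (q * real (card H)) ^ (N - card I)) = real (card H)^N * q^(N - card I)"
      by simp
  qed
  also have "\<dots> = real (card H)^N * (\<Sum>I\<in>Fam. q^(N - card I))" by (simp add: sum_distrib_left)
  finally show ?thesis .
qed



lemma dist_d_sym: "dist_d d x y = dist_d d y x"
  unfolding dist_d_def by (simp add: power2_commute)

lemma dist_d_self: "dist_d d x x = 0"
  unfolding dist_d_def by simp

lemma packing_exists:
  assumes "finite X" "\<alpha> > 0"
  shows "\<exists>P\<subseteq>X. separated d \<alpha> P \<and> (\<forall>x\<in>X. \<exists>p\<in>P. dist_d d x p < \<alpha>)"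
proof -
  let ?F = "{P. P \<subseteq> X \<and> separated d \<alpha> P}"
  have finF: "finite ?F" using assms(1) by (rule finite_subset[rotated, OF finite_Pow_iff[THEN iffD2]]) auto
  have ne: "{} \<in> ?F" by (simp add: separated_def)
  define m where "m = Max (card ` ?F)"
  have "m \<in> card ` ?F" unfolding m_def using finF ne by (intro Max_in) auto
  then obtain P where P: "P \<in> ?F" "card P = m" by auto
  have mx: "card Q \<le> card P" if "Q \<in> ?F" for Q
  proof -
    have "card Q \<le> Max (card ` ?F)" using finF that by (intro Max_ge) auto
    then show ?thesis using P(2) unfolding m_def by simp
  qed
  have finP: "finite P" using P(1) assms(1) finite_subset by auto
  show ?thesis
  proof (intro exI[of _ P] conjI ballI)
    show "P \<subseteq> X" "separated d \<alpha> P" using P(1) by auto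
  next
    fix x assume x: "x \<in> X"
    show "\<exists>p\<in>P. dist_d d x p < \<alpha>"
    proof (rule ccontr)
      assume "\<not> (\<exists>p\<in>P. dist_d d x p < \<alpha>)"
      then have far: "\<forall>p\<in>P. dist_d d x p \<ge> \<alpha>" by auto
      then have xP: "x \<notin> P" using assms(2) dist_d_self[of d x] by auto
      have "separated d \<alpha> (insert x P)"
        using P(1) far unfolding separated_def by (auto simp: dist_d_sym)
      then have "insert x P \<in> ?F" using x P(1) by auto
      then have "card (insert x P) \<le> card P" by (rule mx)
      then show False using finP xP by simp
    qed
  qed
qed

lemma packing_card_ge:
  assumes "finite X" "P \<subseteq> X" "separated d \<alpha> P"
  shows "card P \<le> packing_card d X \<alpha>"
proof -
  let ?F = "{Y. Y \<subseteq> X \<and> finite Y \<and> separated d \<alpha> Y}"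
  have finF: "finite ?F" using assms(1) by (rule finite_subset[rotated, OF finite_Pow_iff[THEN iffD2]]) auto
  have "P \<in> ?F" using assms finite_subset by auto
  then show ?thesis unfolding packing_card_def using finF by (intro Max_ge) auto
qed

lemma inner_diff_le:
  assumes "v \<in> scaled_hcube d" "d > 0"
  shows "\<bar>inner_d d v x - inner_d d v y\<bar> \<le> dist_d d x y"
proof -
  have "\<bar>inner_d d v x - inner_d d v y\<bar> = \<bar>\<Sum>j<d. v j * (x j - y j)\<bar>"
    unfolding inner_d_def by (simp add: sum_subtractf algebra_simps)
  also have "\<dots> \<le> (\<Sum>j<d. \<bar>v j\<bar> * \<bar>x j - y j\<bar>)"
    by (rule order_trans[OF sum_abs]) (simp add: abs_mult)
  also have "\<dots> \<le> L2_set v {..<d} * L2_set (\<lambda>j. x j - y j) {..<d}"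
    by (rule L2_set_mult_ineq)
  also have "L2_set v {..<d} = 1"
  proof -
    have "\<And>j. j < d \<Longrightarrow> (v j)^2 = 1 / real d"
      using assms(1) by (auto simp: scaled_hcube_def power_divide)
    then have "(\<Sum>j<d. (v j)^2) = 1" using assms(2) by simp
    then show ?thesis unfolding L2_set_def by simp
  qed
  also have "L2_set (\<lambda>j. x j - y j) {..<d} = dist_d d x y"
    unfolding L2_set_def dist_d_def by simp
  finally show ?thesis by simp
qed



lemma fam_bound:
  fixes K q :: real
  assumes M: "M = nat \<lfloor>K\<rfloor>" and N: "N \<ge> 1" and q: "0 \<le> q" "q \<le> 1" and MN: "M \<le> N"
  shows "(\<Sum>I\<in>{I. I \<subseteq> {..<N} \<and> real (card I) < K}. q^(N - card I)) \<le> real (M+1) * real N^M * q^(N-M)"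
proof -
  let ?Fam = "{I. I \<subseteq> {..<N} \<and> real (card I) < K}"
  have cM: "card I \<le> M" if "I \<in> ?Fam" for I
  proof -
    have "real (card I) < K" using that by simp
    then have "int (card I) \<le> \<lfloor>K\<rfloor>" by (simp add: le_floor_iff)
    then show ?thesis using M by linarith
  qed
  have finFam: "finite ?Fam" by (rule finite_subset[of _ "Pow {..<N}"]) auto
  have "(\<Sum>I\<in>?Fam. q^(N - card I)) \<le> (\<Sum>I\<in>?Fam. q^(N - M))"
  proof (rule sum_mono)
    fix I assume "I \<in> ?Fam"
    then have "N - M \<le> N - card I" using cM by (simp add: diff_le_mono2)
    then show "q^(N - card I) \<le> q^(N - M)" using power_decreasing q by blast
  qed
  also have "\<dots> = real (card ?Fam) * q^(N-M)" by simp
  also have "\<dots> \<le> real (M+1) * real N^M * q^(N-M)"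
  proof (rule mult_right_mono)
    show "0 \<le> q^(N-M)" using q by simp
    have sub: "?Fam \<subseteq> (\<Union>m\<in>{..M}. {I. I \<subseteq> {..<N} \<and> card I = m})" using cM by auto
    have "card ?Fam \<le> card (\<Union>m\<in>{..M}. {I. I \<subseteq> {..<N} \<and> card I = m})"
      by (rule card_mono[OF _ sub]) (rule finite_subset[of _ "Pow {..<N}"], auto)
    also have "\<dots> \<le> (\<Sum>m\<in>{..M}. card {I. I \<subseteq> {..<N} \<and> card I = m})" by (rule card_UN_le) simp
    also have "\<dots> = (\<Sum>m\<in>{..M}. N choose m)" by (simp add: n_subsets)
    also have "\<dots> \<le> (\<Sum>m\<in>{..M}. N^M)"
    proof (rule sum_mono)
      fix m assume "m \<in> {..M}"
      then have "m \<le> M" by simp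
      then have "N choose m \<le> N^m" using MN by (intro binomial_le_pow) simp
      also have "\<dots> \<le> N^M" using N \<open>m \<le> M\<close> by (intro power_increasing) auto
      finally show "N choose m \<le> N^M" .
    qed
    also have "\<dots> = (M+1) * N^M" by simp
    finally have "card ?Fam \<le> (M+1) * N^M" .
    then have "real (card ?Fam) \<le> real ((M+1) * N^M)" by (rule of_nat_mono)
    then show "real (card ?Fam) \<le> real (M+1) * real N^M" by (simp add: algebra_simps)
  qed
  finally show ?thesis .
qed

lemma exp_sq_bound: "(x::real) \<ge> 0 \<Longrightarrow> exp x \<ge> (x/2)^2"
proof -
  assume x: "x \<ge> 0"
  have "exp (x/2) \<ge> x/2" using exp_ge_add_one_self[of "x/2"] by linarith
  then have "(x/2)^2 \<le> exp (x/2) ^ 2" using x by (intro power_mono) auto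
  also have "exp (x/2) ^ 2 = exp x" by (simp flip: exp_of_nat_mult)
  finally show ?thesis .
qed

lemma final_num:
  fixes s c1 K :: real
  assumes s: "s \<ge> 500" and c1: "0 < c1" "c1 \<le> 1/8" and K: "K = exp (c1 * s)"
    and N: "N = nat \<lceil>16 * s * K\<rceil>" and M: "M = nat \<lfloor>K\<rfloor>"
  shows "real (M+1) * real N^M * (7/8)^(N-M) \<le> exp (- s / 2)"
proof -
  have K1: "K \<ge> 1" using K c1 s by simp
  have Kle: "K \<le> exp (s/8)" using K c1 s by simp
  have MK: "real M \<le> K" using M K1 by linarith
  have M0: "real M \<ge> 0" by simp
  have pos: "16 * s * K \<ge> 0" using K1 s by simp
  have NN: "real N = of_int \<lceil>16 * s * K\<rceil>" using N pos by simp
  have Nlo: "real N \<ge> 16 * s * K" using NN by simp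
  have Nhi: "real N \<le> 16 * s * K + 1" using NN ceiling_correct[of "16 * s * K"] by linarith
  have sK: "s * K \<ge> s" "s * K \<ge> 500 * K" using K1 s by (simp_all add: mult_left_mono mult_right_mono)
  have Nhi2: "real N \<le> 17 * s * K" using Nhi sK s by linarith
  have MN: "M \<le> N" using MK Nlo K1 s by (smt (verit) mult_le_cancel_right1 of_nat_le_iff mult_left_mono)
  have e1: "real (M+1) \<le> exp K"
  proof -
    have "real (M+1) \<le> exp (real M)" using exp_ge_add_one_self[of "real M"] by simp
    also have "\<dots> \<le> exp K" using MK by simp
    finally show ?thesis .
  qed
  have N_exp: "real N \<le> exp (s/2)"
  proof -
    have "17 \<le> (9/256) * s" using s by simp
    then have "17 * s \<le> ((9/256) * s) * s" using s by (intro mult_right_mono) auto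
    also have "((9/256) * s) * s = (3/16 * s)^2" by (simp add: power2_eq_square)
    finally have "17 * s \<le> (3/16 * s)^2" .
    also have "\<dots> \<le> exp (3/8 * s)" using exp_sq_bound[of "3/8 * s"] s by simp
    finally have "17 * s \<le> exp (3/8 * s)" .
    then have "17 * s * K \<le> exp (3/8 * s) * exp (s/8)" using Kle K1 s
      by (intro mult_mono) auto
    also have "\<dots> = exp (s/2)" by (simp flip: exp_add)
    finally show ?thesis using Nhi2 by simp
  qed
  have e2: "real N ^ M \<le> exp (s * K / 2)"
  proof -
    have "real N ^ M \<le> exp (s/2) ^ M" using N_exp by (intro power_mono) auto
    also have "\<dots> = exp (real M * (s/2))" by (simp flip: exp_of_nat_mult)
    also have "\<dots> \<le> exp (s * K / 2)" using MK s by (simp add: mult_right_mono)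
    finally show ?thesis .
  qed
  have e3: "(7/8::real)^(N-M) \<le> exp (- (16 * s * K - K) / 8)"
  proof -
    have "(7/8::real) \<le> exp (-1/8)" using exp_ge_add_one_self[of "-1/8"] by simp
    then have "(7/8::real)^(N-M) \<le> exp (-1/8)^(N-M)" by (intro power_mono) auto
    also have "\<dots> = exp (real (N-M) * (-1/8))" by (simp flip: exp_of_nat_mult)
    also have "\<dots> \<le> exp (- (16 * s * K - K) / 8)"
    proof -
      have "real (N-M) \<ge> 16 * s * K - K" using MN Nlo MK by (simp add: of_nat_diff)
      then show ?thesis by simp
    qed
    finally show ?thesis .
  qed
  have "real (M+1) * real N^M * (7/8)^(N-M) \<le> exp K * exp (s * K / 2) * exp (- (16 * s * K - K) / 8)"
    using e1 e2 e3 by (intro mult_mono) auto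
  also have "\<dots> = exp (K + s * K / 2 - (16 * s * K - K) / 8)" by (simp flip: exp_add exp_diff add: diff_divide_distrib)
  also have "\<dots> \<le> exp (- s / 2)"
  proof -
    have "K + s * K / 2 - (16 * s * K - K) / 8 \<le> - s / 2" 
    proof -
      have "K + s * K / 2 - (16 * s * K - K) / 8 = 9/8 * K - 3/2 * (s * K)" by (simp add: field_simps)
      then show ?thesis using K1 s sK by linarith
    qed
    then show ?thesis by simp
  qed
  finally show ?thesis .
qed



lemma table_finite:
  assumes "finite V"
  shows "finite (table n m out M B V)"
proof -
  let ?Z = "insert None ((\<lambda>i. Some (B i)) ` {..<m})"
  have "{R. length R = n \<and> rows_sub m B R} \<subseteq> {R. set R \<subseteq> ?Z \<and> length R = n}"
    unfolding rows_sub_def by auto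
  moreover have "finite {R. set R \<subseteq> ?Z \<and> length R = n}" by (rule finite_lists_length_eq) simp
  ultimately have fR: "finite {R. length R = n \<and> rows_sub m B R}" by (rule finite_subset)
  have "table n m out M B V = (\<lambda>(v,R). out M v R) ` (V \<times> {R. length R = n \<and> rows_sub m B R})"
    unfolding table_def by auto
  then show ?thesis using assms fR by simp
qed

lemma scaled_hcube_finite: "finite (scaled_hcube d)"
  by (simp add: scaled_hcube_G G_finite)

lemma scaled_hcube_card: "d > 0 \<Longrightarrow> card (scaled_hcube d) = 2^d"
  by (simp add: scaled_hcube_G G_card)

lemma core:
  fixes d n k N :: nat and s c1 K xi' :: real
  assumes d: "d > 0" and prot: "is_protocol d k n msg resp out"
    and Asuc: "A \<in> A_suc d s xi' msg resp out"
    and s: "s \<ge> 500" and c1: "0 < c1" "c1 \<le> 1/8" and K: "K = exp (c1 * s)"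
    and N: "N = nat \<lceil>16 * s * K\<rceil>"
    and alpha: "real d powr (-8) \<le> sqrt (s / real d) / 4"
  shows "real (card {Vt \<in> PiE {..<N} (\<lambda>_. scaled_hcube d).
            real (packing_card d (orth_entries d n (d div 2) xi' out (msg A) A (Vt ` {..<N})) (real d powr (-8))) \<ge> K})
         \<ge> (1 - exp (- s / 2)) * real (card (PiE {..<N} (\<lambda>_. scaled_hcube d)))"
proof -
  define H where "H = scaled_hcube d"
  define U where "U = {..<N}"
  define \<alpha> where "\<alpha> = real d powr (-8)"
  define xo where "xo = (\<lambda>v. out (msg A) v (resp A v))"
  define succ where "succ = (\<lambda>v. succeeds d s xi' msg resp out A v)"
  define u where "u = sqrt (s / real d) - \<alpha>"
  define S :: "nat set \<Rightarrow> (nat \<Rightarrow> nat \<Rightarrow> real) \<Rightarrow> (nat \<Rightarrow> real) set" where "S = (\<lambda>I w. {v\<in>H. \<not> succ v \<or> (\<exists>i\<in>I. \<bar>inner_d d v (xo (w i))\<bar> \<ge> u)})"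
  define Fam :: "nat set set" where "Fam = {I. I \<subseteq> U \<and> real (card I) < K}"
  define M where "M = nat \<lfloor>K\<rfloor>"
  define Ort where "Ort = (\<lambda>Vt. orth_entries d n (d div 2) xi' out (msg A) A (Vt ` U))"
  have finH: "finite H" unfolding H_def by (rule scaled_hcube_finite)
  have cH: "card H = 2^d" unfolding H_def using d by (rule scaled_hcube_card)
  have cHpos: "real (card H) > 0" using cH by simp
  have \<alpha>pos: "\<alpha> > 0" unfolding \<alpha>_def using d by simp
  have K1: "K \<ge> 1" using K c1 s by simp
  have succ_iff: "succ v \<longleftrightarrow> inf_norm_le (d div 2) d A (xo v) xi' \<and> \<bar>inner_d d v (xo v)\<bar> \<ge> sqrt (s / real d)" for v
    unfolding succ_def xo_def succeeds_def Let_def by simp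
  have Amat: "A \<in> sign_mats (d div 2) d" and Acard: "real (card {v\<in>H. succ v}) \<ge> 1/4 * real (card H)"
    using Asuc unfolding A_suc_def H_def succ_def by auto
  have resp: "length (resp A v) = n \<and> rows_sub (d div 2) A (resp A v)" if "v \<in> H" for v
    using prot Amat that unfolding is_protocol_def H_def by blast
  have xo_unit: "xo v \<in> unit_sphere_d d" if v: "v \<in> H" for v
  proof -
    have "length (msg A) = k * d" using prot Amat unfolding is_protocol_def by blast
    moreover have "\<forall>r\<in>set (resp A v). r = None \<or> (\<exists>h\<in>hcube d. r = Some h)"
    proof
      fix r assume "r \<in> set (resp A v)"
      then have "r = None \<or> (\<exists>i<d div 2. r = Some (A i))" using resp[OF v] unfolding rows_sub_def by blast
      then show "r = None \<or> (\<exists>h\<in>hcube d. r = Some h)" using Amat unfolding sign_mats_def by blast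
    qed
    ultimately show ?thesis using prot v resp[OF v] unfolding is_protocol_def xo_def H_def by blast
  qed
  have u0: "u \<ge> 0" and uu: "- (real d * u^2 / 2) \<le> - s / 4"
  proof -
    have a4: "\<alpha> \<le> sqrt (s / real d) / 4" using alpha unfolding \<alpha>_def .
    have u34: "u \<ge> 3/4 * sqrt (s / real d)" unfolding u_def using a4 by simp
    moreover have "sqrt (s / real d) \<ge> 0" using s d by simp
    ultimately show "u \<ge> 0" by linarith
    have "(3/4 * sqrt (s / real d))^2 \<le> u^2" using u34 s by (intro power_mono) auto
    moreover have "(3/4 * sqrt (s / real d))^2 = 9/16 * (s / real d)" using s d by (simp add: power_mult_distrib power_divide real_sqrt_pow2)
    ultimately have "9/16 * (s / real d) \<le> u^2" by simp
    then have "real d * (9/16 * (s / real d)) \<le> real d * u^2" by (intro mult_left_mono) auto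
    then have "9/16 * s \<le> real d * u^2" using d by simp
    then show "- (real d * u^2 / 2) \<le> - s / 4" using s by simp
  qed
  have hoef: "real (card {v\<in>H. \<bar>inner_d d v y\<bar> \<ge> u}) \<le> 2 * exp (- s / 4) * real (card H)"
    if "y \<in> unit_sphere_d d" for y
  proof -
    have "(\<Sum>j<d. (y j)^2) = 1" using that unfolding unit_sphere_d_def by simp
    then have "real (card {v\<in>H. \<bar>inner_d d v y\<bar> \<ge> u}) \<le> 2 * exp (- (real d * u^2 / 2)) * real (card H)"
      unfolding H_def using hoeffding_count[OF d _ u0] by blast
    also have "\<dots> \<le> 2 * exp (- s / 4) * real (card H)" using uu by (intro mult_left_mono mult_right_mono) auto
    finally show ?thesis .
  qed
  have small: "K * (2 * exp (- s / 4)) \<le> 1/8"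
  proof -
    have ee: "exp (c1 * s - s / 4) = exp (c1 * s) * exp (- s / 4)"
      using exp_add[of "c1 * s" "- s / 4"] by simp
    have "K * (2 * exp (- s / 4)) = 2 * exp (c1 * s - s / 4)" unfolding K ee by simp
    also have "\<dots> \<le> 2 * exp (- s / 8)"
    proof -
      have "c1 * s \<le> 1/8 * s" using c1 s by (intro mult_right_mono) auto
      then have "c1 * s - s / 4 \<le> - s / 8" by linarith
      then show ?thesis by simp
    qed
    also have "exp (- s / 8) = 1 / exp (s / 8)" by (simp add: exp_minus field_simps)
    also have "exp (s / 8) \<ge> 16" using exp_ge_add_one_self[of "s/8"] s by linarith
    then have "2 * (1 / exp (s / 8)) \<le> 1/8" by (simp add: field_simps)
    finally show ?thesis .
  qed
  have Sbound: "S I w \<subseteq> H \<and> real (card (S I w)) \<le> 7/8 * real (card H)"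
    if I: "I \<in> Fam" and w: "w \<in> PiE I (\<lambda>_. H)" for I w
  proof
    show "S I w \<subseteq> H" unfolding S_def by auto
    have finI: "finite I" using I unfolding Fam_def U_def by (auto intro: finite_subset)
    have cI: "real (card I) \<le> K" using I unfolding Fam_def by simp
    have sub: "S I w \<subseteq> {v\<in>H. \<not> succ v} \<union> (\<Union>i\<in>I. {v\<in>H. \<bar>inner_d d v (xo (w i))\<bar> \<ge> u})"
      unfolding S_def by auto
    have "card (S I w) \<le> card ({v\<in>H. \<not> succ v} \<union> (\<Union>i\<in>I. {v\<in>H. \<bar>inner_d d v (xo (w i))\<bar> \<ge> u}))"
      by (rule card_mono[OF _ sub]) (use finH finI in auto)
    also have "\<dots> \<le> card {v\<in>H. \<not> succ v} + card (\<Union>i\<in>I. {v\<in>H. \<bar>inner_d d v (xo (w i))\<bar> \<ge> u})"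
      by (rule card_Un_le)
    also have "\<dots> \<le> card {v\<in>H. \<not> succ v} + (\<Sum>i\<in>I. card {v\<in>H. \<bar>inner_d d v (xo (w i))\<bar> \<ge> u})"
      using card_UN_le[OF finI] by simp
    finally have c00: "card (S I w) \<le> card {v\<in>H. \<not> succ v} + (\<Sum>i\<in>I. card {v\<in>H. \<bar>inner_d d v (xo (w i))\<bar> \<ge> u})" .
    have "real (card (S I w)) \<le> real (card {v\<in>H. \<not> succ v} + (\<Sum>i\<in>I. card {v\<in>H. \<bar>inner_d d v (xo (w i))\<bar> \<ge> u}))"
      using c00 by (rule of_nat_mono)
    then have c0: "real (card (S I w)) \<le> real (card {v\<in>H. \<not> succ v}) + (\<Sum>i\<in>I. real (card {v\<in>H. \<bar>inner_d d v (xo (w i))\<bar> \<ge> u}))"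
      by simp
    have "card {v\<in>H. \<not> succ v} + card {v\<in>H. succ v} = card H"
    proof -
      have "{v\<in>H. \<not> succ v} \<union> {v\<in>H. succ v} = H" by auto
      moreover have "{v\<in>H. \<not> succ v} \<inter> {v\<in>H. succ v} = {}" by auto
      moreover have "card ({v\<in>H. \<not> succ v} \<union> {v\<in>H. succ v}) = card {v\<in>H. \<not> succ v} + card {v\<in>H. succ v}"
        by (rule card_Un_disjoint) (use finH in auto)
      ultimately show ?thesis by simp
    qed
    then have "real (card {v\<in>H. \<not> succ v} + card {v\<in>H. succ v}) = real (card H)" by simp
    then have "real (card {v\<in>H. \<not> succ v}) + real (card {v\<in>H. succ v}) = real (card H)" by simp
    then have ns: "real (card {v\<in>H. \<not> succ v}) \<le> 3/4 * real (card H)"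
      using Acard by linarith
    have "(\<Sum>i\<in>I. real (card {v\<in>H. \<bar>inner_d d v (xo (w i))\<bar> \<ge> u})) \<le> (\<Sum>i\<in>I. 2 * exp (- s / 4) * real (card H))"
    proof (rule sum_mono)
      fix i assume "i \<in> I"
      then have "w i \<in> H" using w by auto
      then show "real (card {v\<in>H. \<bar>inner_d d v (xo (w i))\<bar> \<ge> u}) \<le> 2 * exp (- s / 4) * real (card H)"
        by (intro hoef xo_unit)
    qed
    also have "\<dots> = real (card I) * (2 * exp (- s / 4)) * real (card H)" by simp
    also have "\<dots> \<le> K * (2 * exp (- s / 4)) * real (card H)"
      using cI by (intro mult_right_mono) auto
    also have "\<dots> \<le> 1/8 * real (card H)" using small by (intro mult_right_mono) auto
    finally show "real (card (S I w)) \<le> 7/8 * real (card H)" using c0 ns by linarith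
  qed
  have FamPow: "Fam \<subseteq> Pow {..<N}" unfolding Fam_def U_def by auto
  have ort_fin: "finite (Ort Vt)" for Vt
  proof -
    have "Ort Vt \<subseteq> table n (d div 2) out (msg A) A (Vt ` U)" unfolding Ort_def orth_entries_def by auto
    moreover have "finite (table n (d div 2) out (msg A) A (Vt ` U))" by (rule table_finite) (simp add: U_def)
    ultimately show ?thesis by (rule finite_subset)
  qed
  have bad_sub: "{Vt \<in> PiE U (\<lambda>_. H). \<not> (real (packing_card d (Ort Vt) \<alpha>) \<ge> K)}
      \<subseteq> {Vt\<in>PiE {..<N} (\<lambda>_. H). \<exists>I\<in>Fam. \<forall>j\<in>{..<N}-I. Vt j \<in> S I (restrict Vt I)}"
  proof clarify
    fix Vt assume Vt: "Vt \<in> PiE U (\<lambda>_. H)" and pk: "\<not> (real (packing_card d (Ort Vt) \<alpha>) \<ge> K)"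
    have VtH: "Vt j \<in> H" if "j \<in> U" for j using Vt that by auto
    define Xs where "Xs = (\<lambda>j. xo (Vt j)) ` {j\<in>U. succ (Vt j)}"
    have finXs: "finite Xs" unfolding Xs_def U_def by simp
    obtain P where P: "P \<subseteq> Xs" "separated d \<alpha> P" "\<forall>x\<in>Xs. \<exists>p\<in>P. dist_d d x p < \<alpha>"
      using packing_exists[OF finXs \<alpha>pos] by blast
    have XsO: "Xs \<subseteq> Ort Vt"
    proof
      fix x assume "x \<in> Xs"
      then obtain j where j: "j \<in> U" "succ (Vt j)" "x = xo (Vt j)" unfolding Xs_def by auto
      have "x \<in> table n (d div 2) out (msg A) A (Vt ` U)"
        unfolding table_def using j resp[OF VtH[OF j(1)]] unfolding xo_def by blast
      moreover have "inf_norm_le (d div 2) d A x xi'" using j succ_iff by simp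
      ultimately show "x \<in> Ort Vt" unfolding Ort_def orth_entries_def by simp
    qed
    have "card P \<le> packing_card d (Ort Vt) \<alpha>"
      using packing_card_ge[OF ort_fin] P(1,2) XsO by blast
    then have cP: "real (card P) < K" using pk by simp
    have "\<forall>p\<in>P. \<exists>j. j \<in> U \<and> succ (Vt j) \<and> xo (Vt j) = p" using P(1) unfolding Xs_def by auto
    from bchoice[OF this] obtain jf where jf: "\<forall>p\<in>P. jf p \<in> U \<and> succ (Vt (jf p)) \<and> xo (Vt (jf p)) = p" by blast
    define I where "I = jf ` P"
    have finP: "finite P" using P(1) finXs finite_subset by auto
    have "card I \<le> card P" unfolding I_def using finP by (rule card_image_le)
    then have "real (card I) < K" using cP by linarith
    moreover have "I \<subseteq> U" unfolding I_def using jf by auto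
    ultimately have IF: "I \<in> Fam" unfolding Fam_def by simp
    have "\<forall>j\<in>{..<N}-I. Vt j \<in> S I (restrict Vt I)"
    proof
      fix j assume j: "j \<in> {..<N} - I"
      then have jU: "j \<in> U" unfolding U_def by simp
      show "Vt j \<in> S I (restrict Vt I)"
      proof (cases "succ (Vt j)")
        case False then show ?thesis unfolding S_def using VtH[OF jU] by simp
      next
        case True
        then have "xo (Vt j) \<in> Xs" unfolding Xs_def using jU by auto
        then obtain p where p: "p \<in> P" "dist_d d (xo (Vt j)) p < \<alpha>" using P(3) by blast
        let ?i = "jf p"
        have iI: "?i \<in> I" unfolding I_def using p by simp
        have xi: "xo (restrict Vt I ?i) = p" using jf p(1) iI by simp
        have big: "\<bar>inner_d d (Vt j) (xo (Vt j))\<bar> \<ge> sqrt (s / real d)" using True succ_iff by simp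
        have "\<bar>inner_d d (Vt j) (xo (Vt j)) - inner_d d (Vt j) p\<bar> \<le> dist_d d (xo (Vt j)) p"
          using VtH[OF jU] d unfolding H_def by (rule inner_diff_le)
        then have up: "\<bar>inner_d d (Vt j) p\<bar> \<ge> u" using big p(2) unfolding u_def by linarith
        have "\<exists>i\<in>I. u \<le> \<bar>inner_d d (Vt j) (xo (restrict Vt I i))\<bar>"
        proof (rule bexI[OF _ iI])
          show "u \<le> \<bar>inner_d d (Vt j) (xo (restrict Vt I (jf p)))\<bar>" using up xi by simp
        qed
        then show ?thesis unfolding S_def using VtH[OF jU] by simp
      qed
    qed
    then show "Vt \<in> PiE {..<N} (\<lambda>_. H) \<and> (\<exists>I\<in>Fam. \<forall>j\<in>{..<N}-I. Vt j \<in> S I (restrict Vt I))"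
      using Vt IF unfolding U_def by blast
  qed
  have q78: "(0::real) \<le> 7/8" by simp
  have cnt: "real (card {Vt\<in>PiE {..<N} (\<lambda>_. H). \<exists>I\<in>Fam. \<forall>j\<in>{..<N}-I. Vt j \<in> S I (restrict Vt I)})
           \<le> real (card H)^N * (\<Sum>I\<in>Fam. (7/8)^(N - card I))"
    by (rule count_union[OF finH FamPow Sbound q78])
  have NK: "real N \<ge> 16 * s * K" using N K1 s by simp
  have MK: "real M \<le> K" unfolding M_def using K1 by linarith
  have sK: "16 * s * K \<ge> K" using K1 s by simp
  have MN: "M \<le> N" using MK NK sK by linarith
  have N1: "N \<ge> 1" using NK sK K1 by linarith
  have sumb: "(\<Sum>I\<in>Fam. (7/8::real)^(N - card I)) \<le> real (M+1) * real N^M * (7/8)^(N-M)"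
    unfolding Fam_def U_def by (rule fam_bound[OF M_def N1 _ _ MN]) auto
  also have "\<dots> \<le> exp (- s / 2)" by (rule final_num[OF s c1 K N M_def])
  finally have sumb2: "(\<Sum>I\<in>Fam. (7/8::real)^(N - card I)) \<le> exp (- s / 2)" .
  have cOm: "card (PiE U (\<lambda>_. H)) = card H ^ N" unfolding U_def by (simp add: card_PiE)
  have finOm: "finite (PiE U (\<lambda>_. H))" unfolding U_def using finH by (simp add: finite_PiE)
  let ?G = "{Vt \<in> PiE U (\<lambda>_. H). real (packing_card d (Ort Vt) \<alpha>) \<ge> K}"
  let ?B = "{Vt \<in> PiE U (\<lambda>_. H). \<not> (real (packing_card d (Ort Vt) \<alpha>) \<ge> K)}"
  have split: "card ?G + card ?B = card (PiE U (\<lambda>_. H))"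
  proof -
    have "?G \<union> ?B = PiE U (\<lambda>_. H)" by auto
    moreover have "card (?G \<union> ?B) = card ?G + card ?B"
      by (rule card_Un_disjoint) (use finOm in auto)
    ultimately show ?thesis by simp
  qed
  have "real (card ?B) \<le> real (card {Vt\<in>PiE {..<N} (\<lambda>_. H). \<exists>I\<in>Fam. \<forall>j\<in>{..<N}-I. Vt j \<in> S I (restrict Vt I)})"
    by (intro of_nat_mono card_mono bad_sub) (simp add: finite_PiE finH)
  also have "\<dots> \<le> real (card H)^N * exp (- s / 2)"
  proof -
    have "real (card H)^N * (\<Sum>I\<in>Fam. (7/8::real)^(N - card I)) \<le> real (card H)^N * exp (- s / 2)"
      by (rule mult_left_mono[OF sumb2]) simp
    then show ?thesis using cnt by linarith
  qed
  finally have Bb: "real (card ?B) \<le> real (card H)^N * exp (- s / 2)" .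
  have "real (card ?G + card ?B) = real (card H ^ N)" using split cOm by simp
  then have "real (card ?G) = real (card H)^N - real (card ?B)" by simp
  then have "real (card ?G) \<ge> (1 - exp (- s / 2)) * real (card H)^N" using Bb by (simp add: algebra_simps)
  then have "real (card ?G) \<ge> (1 - exp (- s / 2)) * real (card (PiE U (\<lambda>_. H)))" unfolding cOm by simp
  then show ?thesis unfolding H_def U_def \<alpha>_def Ort_def .
qed



lemma s_facts:
  fixes \<delta> :: real and d :: nat
  assumes \<delta>: "0 < \<delta>" "\<delta> < 1" and d: "d \<ge> 250000"
  shows "real d powr (1 - \<delta>/2) * (ln (real d))^2 \<ge> 500"
    and "real d powr (-8) \<le> sqrt (real d powr (1 - \<delta>/2) * (ln (real d))^2 / real d) / 4"
proof -
  let ?s = "real d powr (1 - \<delta>/2) * (ln (real d))^2"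
  have d1: "real d \<ge> 250000" using d by simp
  have ln1: "ln (real d) \<ge> 1"
  proof -
    have "exp 1 \<le> (3::real)" using exp_le by simp
    also have "\<dots> \<le> real d" using d1 by simp
    finally show ?thesis using d1 by (simp add: ln_ge_iff)
  qed
  have ln2: "(ln (real d))^2 \<ge> 1" using ln1 by (simp add: one_le_power)
  have "real d powr (1/2) \<le> real d powr (1 - \<delta>/2)" using \<delta> d1 by (intro powr_mono) auto
  then have sq: "sqrt (real d) \<le> real d powr (1 - \<delta>/2)" by (simp add: powr_half_sqrt)
  have sqd: "sqrt (real d) \<ge> 500"
  proof -
    show ?thesis using real_le_rsqrt[of 500 "real d"] d1 by simp
  qed
  have "?s \<ge> sqrt (real d) * 1" using sq ln2 sqd by (intro mult_mono) auto
  then have ss: "?s \<ge> sqrt (real d)" by simp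
  then show "?s \<ge> 500" using sqd by linarith
  have "1 / real d \<le> ?s / real d" using ss sqd d1 by (intro divide_right_mono) auto
  then have "sqrt (1 / real d) \<le> sqrt (?s / real d)" by simp
  then have A: "1 / sqrt (real d) \<le> sqrt (?s / real d)" by (simp add: real_sqrt_divide)
  have B: "4 * sqrt (real d) \<le> real d ^ 8"
  proof -
    have "4 * sqrt (real d) \<le> sqrt (real d) * sqrt (real d)" using sqd by (intro mult_right_mono) auto
    also have "\<dots> = real d" by simp
    also have "\<dots> \<le> real d ^ 8" using d1 by (simp add: self_le_power)
    finally show ?thesis .
  qed
  have "real d powr (-8) = 1 / real d ^ 8" using d1 by (simp add: powr_minus powr_realpow divide_inverse)
  also have "\<dots> \<le> 1 / (4 * sqrt (real d))" using B d1 by (intro divide_left_mono) auto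
  also have "\<dots> = (1 / sqrt (real d)) / 4" by simp
  also have "\<dots> \<le> sqrt (?s / real d) / 4" using A by simp
  finally show "real d powr (-8) \<le> sqrt (?s / real d) / 4" .
qed

theorem lemma5p4:
  shows "\<exists>c0>0. \<forall>c1::real. 0 < c1 \<and> c1 \<le> c0 \<longrightarrow>
    (\<forall>(\<delta>::real) (kf::nat \<Rightarrow> nat).
       0 < \<delta> \<and> \<delta> < 1 \<and> ((\<lambda>d. ln (real (kf d)) / ln (real d)) \<longlongrightarrow> 1 - \<delta>) at_top \<longrightarrow>
       (\<exists>d0::nat. \<forall>d\<ge>d0. even d \<longrightarrow>
         (let s = real d powr (1 - \<delta>/2) * (ln (real d))^2;
              xi = 2 * exp (- ((ln (real d))^5));
              xi' = sqrt (real d) * xi;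
              K = exp (c1 * s);
              N = nat \<lceil>16 * s * K\<rceil>;
              k = kf d
          in \<forall>(n::nat) msg resp out.
               is_protocol d k n msg resp out \<and>
               real (card {(A, v) \<in> sign_mats (d div 2) d \<times> scaled_hcube d.
                             succeeds d s xi' msg resp out A v})
                 \<ge> 1/2 * real (card (sign_mats (d div 2) d \<times> scaled_hcube d))
               \<longrightarrow> (\<forall>A\<in>A_suc d s xi' msg resp out.
                     real (card {Vt \<in> PiE {..<N} (\<lambda>_. scaled_hcube d).
                        real (packing_card d
                           (orth_entries d n (d div 2) xi' out (msg A) A (Vt ` {..<N}))
                           (real d powr (-8))) \<ge> K})
                     \<ge> (1 - exp (- s / 2)) * real (card (PiE {..<N} (\<lambda>_. scaled_hcube d)))))))"
proof (intro exI[of _ "1/8::real"] conjI allI impI)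
  show "(0::real) < 1/8" by simp
  fix c1 :: real and \<delta> :: real and kf :: "nat \<Rightarrow> nat"
  assume c1: "0 < c1 \<and> c1 \<le> 1/8"
  assume \<delta>: "0 < \<delta> \<and> \<delta> < 1 \<and> ((\<lambda>d. ln (real (kf d)) / ln (real d)) \<longlongrightarrow> 1 - \<delta>) at_top"
  show "\<exists>d0::nat. \<forall>d\<ge>d0. even d \<longrightarrow>
         (let s = real d powr (1 - \<delta>/2) * (ln (real d))^2;
              xi = 2 * exp (- ((ln (real d))^5));
              xi' = sqrt (real d) * xi;
              K = exp (c1 * s);
              N = nat \<lceil>16 * s * K\<rceil>;
              k = kf d
          in \<forall>(n::nat) msg resp out.
               is_protocol d k n msg resp out \<and>
               real (card {(A, v) \<in> sign_mats (d div 2) d \<times> scaled_hcube d.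
                             succeeds d s xi' msg resp out A v})
                 \<ge> 1/2 * real (card (sign_mats (d div 2) d \<times> scaled_hcube d))
               \<longrightarrow> (\<forall>A\<in>A_suc d s xi' msg resp out.
                     real (card {Vt \<in> PiE {..<N} (\<lambda>_. scaled_hcube d).
                        real (packing_card d
                           (orth_entries d n (d div 2) xi' out (msg A) A (Vt ` {..<N}))
                           (real d powr (-8))) \<ge> K})
                     \<ge> (1 - exp (- s / 2)) * real (card (PiE {..<N} (\<lambda>_. scaled_hcube d)))))"
  proof (intro exI[of _ "250000::nat"] allI impI)
    fix d :: nat assume d: "d \<ge> 250000" and "even d"
    have dpos: "d > 0" using d by simp
    have \<delta>': "0 < \<delta>" "\<delta> < 1" using \<delta> by auto
    note sf = s_facts[OF \<delta>' d]
    show "let s = real d powr (1 - \<delta>/2) * (ln (real d))^2;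
              xi = 2 * exp (- ((ln (real d))^5));
              xi' = sqrt (real d) * xi;
              K = exp (c1 * s);
              N = nat \<lceil>16 * s * K\<rceil>;
              k = kf d
          in \<forall>(n::nat) msg resp out.
               is_protocol d k n msg resp out \<and>
               real (card {(A, v) \<in> sign_mats (d div 2) d \<times> scaled_hcube d.
                             succeeds d s xi' msg resp out A v})
                 \<ge> 1/2 * real (card (sign_mats (d div 2) d \<times> scaled_hcube d))
               \<longrightarrow> (\<forall>A\<in>A_suc d s xi' msg resp out.
                     real (card {Vt \<in> PiE {..<N} (\<lambda>_. scaled_hcube d).
                        real (packing_card d
                           (orth_entries d n (d div 2) xi' out (msg A) A (Vt ` {..<N}))
                           (real d powr (-8))) \<ge> K})
                     \<ge> (1 - exp (- s / 2)) * real (card (PiE {..<N} (\<lambda>_. scaled_hcube d))))"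
      unfolding Let_def
    proof (intro allI impI ballI, goal_cases)
      case (1 n msg resp out A)
      have prot: "is_protocol d (kf d) n msg resp out" using 1(1) by blast
      have c1': "0 < c1" "c1 \<le> 1/8" using c1 by auto
      show ?case by (rule core[OF dpos prot 1(2) sf(1) c1' refl refl sf(2)])
    qed
  qed
qed

end
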